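(* Let $X$ be a connected vertex-transitive graph all of whose vertices have finite degree, with its path metric, and fix a vertex $x$. (i) If $\lim_{l\to\infty}\frac1l\log|B(x,l)|=0$, then $h_\infty(X)=0$. (ii) If $\limsup_{l\to\infty}\frac1l\log|B(x,l)|>0$, then $h_\infty(X)=\infty$.
   Context: A graph is vertex-transitive if for any two vertices $v,v'$ there is a graph automorphism mapping $v$ to $v'$. The path metric is the minimal number of edges of a path between two vertices; $B(x,l)$ is the closed ball. Coarse entropy $h_\infty(X)=\lim_{\delta\to\infty}\lim_{R\to\infty}\limsup_{n\to\infty}\frac1n\log s(n,R,\delta,x_0)$, where $s(n,R,\delta,x_0)$ is the supremum of cardinalities of $R$-separated sets of $\delta$-paths $(x_0,\dots,x_n)$ ($d(x_i,x_{i+1})\le\delta$) starting at $x_0$, paths compared by $\max_i d(x_i,y_i)$. *)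

theory Defs
  imports "HOL-Analysis.Analysis" "HOL-Library.Liminf_Limsup"
begin

definition walk :: "('a \<Rightarrow> 'a \<Rightarrow> bool) \<Rightarrow> (nat \<Rightarrow> 'a) \<Rightarrow> nat \<Rightarrow> bool" where
  "walk E p n \<longleftrightarrow> (\<forall>i<n. E (p i) (p (Suc i)))"

definition graph_connected :: "('a \<Rightarrow> 'a \<Rightarrow> bool) \<Rightarrow> bool" where
  "graph_connected E \<longleftrightarrow> (\<forall>x y. \<exists>p n. p 0 = x \<and> p n = y \<and> walk E p n)"

definition locally_finite :: "('a \<Rightarrow> 'a \<Rightarrow> bool) \<Rightarrow> bool" where
  "locally_finite E \<longleftrightarrow> (\<forall>x. finite {y. E x y})"

definition graph_automorphism :: "('a \<Rightarrow> 'a \<Rightarrow> bool) \<Rightarrow> ('a \<Rightarrow> 'a) \<Rightarrow> bool" where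
  "graph_automorphism E \<sigma> \<longleftrightarrow> bij \<sigma> \<and> (\<forall>a b. E a b \<longleftrightarrow> E (\<sigma> a) (\<sigma> b))"

definition vertex_transitive :: "('a \<Rightarrow> 'a \<Rightarrow> bool) \<Rightarrow> bool" where
  "vertex_transitive E \<longleftrightarrow> (\<forall>v v'. \<exists>\<sigma>. graph_automorphism E \<sigma> \<and> \<sigma> v = v')"

definition gdist :: "('a \<Rightarrow> 'a \<Rightarrow> bool) \<Rightarrow> 'a \<Rightarrow> 'a \<Rightarrow> nat" where
  "gdist E x y = (LEAST n. \<exists>p. p 0 = x \<and> p n = y \<and> walk E p n)"

definition gball :: "('a \<Rightarrow> 'a \<Rightarrow> bool) \<Rightarrow> 'a \<Rightarrow> nat \<Rightarrow> 'a set" where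
  "gball E x l = {y. gdist E x y \<le> l}"

definition delta_paths :: "('a \<Rightarrow> 'a \<Rightarrow> bool) \<Rightarrow> nat \<Rightarrow> real \<Rightarrow> 'a \<Rightarrow> 'a list set" where
  "delta_paths E n \<delta> x0 = {p. length p = Suc n \<and> p ! 0 = x0 \<and>
       (\<forall>i<n. real (gdist E (p ! i) (p ! Suc i)) \<le> \<delta>)}"

definition path_dist :: "('a \<Rightarrow> 'a \<Rightarrow> bool) \<Rightarrow> 'a list \<Rightarrow> 'a list \<Rightarrow> real" where
  "path_dist E p q = Max {real (gdist E (p ! i) (q ! i)) | i. i < length p}"

definition separated :: "('a \<Rightarrow> 'a \<Rightarrow> bool) \<Rightarrow> real \<Rightarrow> 'a list set \<Rightarrow> bool" where
  "separated E R S \<longleftrightarrow> (\<forall>p\<in>S. \<forall>q\<in>S. p \<noteq> q \<longrightarrow> path_dist E p q > R)"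

text \<open>s(n,R,delta,x0): supremum of cardinalities of R-separated sets of delta-paths
  (sup over finite such sets, which equals the sup over all such sets).\<close>
definition sep_count :: "('a \<Rightarrow> 'a \<Rightarrow> bool) \<Rightarrow> nat \<Rightarrow> real \<Rightarrow> real \<Rightarrow> 'a \<Rightarrow> ereal" where
  "sep_count E n R \<delta> x0 = Sup {ereal (real (card S)) | S.
      finite S \<and> S \<subseteq> delta_paths E n \<delta> x0 \<and> separated E R S}"

definition growth_term :: "('a \<Rightarrow> 'a \<Rightarrow> bool) \<Rightarrow> nat \<Rightarrow> real \<Rightarrow> real \<Rightarrow> 'a \<Rightarrow> ereal" where
  "growth_term E n R \<delta> x0 =
     (let s = sep_count E n R \<delta> x0 in
      if s = \<infinity> then \<infinity> else ereal (ln (real_of_ereal s) / real n))"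

definition coarse_entropy :: "('a \<Rightarrow> 'a \<Rightarrow> bool) \<Rightarrow> 'a \<Rightarrow> ereal" where
  "coarse_entropy E x0 =
     Lim at_top (\<lambda>\<delta>::real. Lim at_top (\<lambda>R::real.
        limsup (\<lambda>n. growth_term E n R \<delta> x0)))"

end

theory Submission
  imports Defs
begin


locale grph =
  fixes E :: "'a \<Rightarrow> 'a \<Rightarrow> bool"
  assumes sym: "\<And>a b. E a b \<longleftrightarrow> E b a"
    and conn: "graph_connected E"
    and lf: "locally_finite E"
begin

lemma gdist_walk: "\<exists>p. p 0 = x \<and> p (gdist E x y) = y \<and> walk E p (gdist E x y)"
proof -
  from conn obtain p n where "p 0 = x \<and> p n = y \<and> walk E p n"
    unfolding graph_connected_def by blast
  then have "\<exists>n p. p 0 = x \<and> p n = y \<and> walk E p n" by blast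
  from LeastI_ex[OF this] show ?thesis unfolding gdist_def by blast
qed

lemma gdist_le: "p 0 = x \<Longrightarrow> p n = y \<Longrightarrow> walk E p n \<Longrightarrow> gdist E x y \<le> n"
  unfolding gdist_def by (rule Least_le) blast

lemma gdist_refl[simp]: "gdist E x x = 0"
  using gdist_le[of "\<lambda>i. x" x 0 x] by (simp add: walk_def)

lemma gdist_sub: assumes "walk E p n" "a \<le> b" "b \<le> n"
  shows "gdist E (p a) (p b) \<le> b - a"
proof (rule gdist_le[of "\<lambda>i. p (a + i)"])
  show "walk E (\<lambda>i. p (a + i)) (b - a)" using assms unfolding walk_def by auto
qed (use assms in auto)

lemma gdist_sym: "gdist E x y = gdist E y x"
proof -
  have *: "gdist E b a \<le> gdist E a b" for a b
  proof -
    obtain p where p: "p 0 = a" "p (gdist E a b) = b" "walk E p (gdist E a b)"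
      using gdist_walk by blast
    define n where "n = gdist E a b"
    have "walk E (\<lambda>i. p (n - i)) n"
      unfolding walk_def
    proof (intro allI impI)
      fix i assume i: "i < n"
      have "n - i = Suc (n - Suc i)" using i by simp
      moreover have "E (p (n - Suc i)) (p (Suc (n - Suc i)))" using p(3) i
        unfolding walk_def n_def by auto
      ultimately show "E (p (n - i)) (p (n - Suc i))" using sym by simp
    qed
    then show ?thesis using gdist_le[of "\<lambda>i. p (n - i)" b n a] p unfolding n_def by simp
  qed
  show ?thesis using *[of x y] *[of y x] by simp
qed

lemma gdist_triangle: "gdist E x z \<le> gdist E x y + gdist E y z"
proof -
  obtain p where p: "p 0 = x" "p (gdist E x y) = y" "walk E p (gdist E x y)"
    using gdist_walk by blast
  obtain q where q: "q 0 = y" "q (gdist E y z) = z" "walk E q (gdist E y z)"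
    using gdist_walk by blast
  define n m where "n = gdist E x y" and "m = gdist E y z"
  define r where "r = (\<lambda>i. if i \<le> n then p i else q (i - n))"
  have "walk E r (n + m)" unfolding walk_def
  proof (intro allI impI)
    fix i assume i: "i < n + m"
    show "E (r i) (r (Suc i))"
    proof (cases "i < n")
      case True then show ?thesis using p(3) unfolding r_def walk_def n_def by auto
    next
      case False
      then have "Suc i - n = Suc (i - n)" by simp
      moreover have "i - n < m" using i False by simp
      ultimately show ?thesis using q False p(2) unfolding r_def walk_def n_def m_def
        by (cases "i = n") auto
    qed
  qed
  moreover have "r 0 = x" "r (n + m) = z" using p q unfolding r_def n_def m_def
    by (auto simp: not_le)
  ultimately have "gdist E x z \<le> n + m" using gdist_le[of r x "n+m" z] by simp
  then show ?thesis unfolding n_def m_def .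
qed

lemma gdist_zero: "gdist E a b = 0 \<Longrightarrow> a = b"
  using gdist_walk[of a b] by auto

lemma gball_finite: "finite (gball E x l)"
proof (induction l)
  case 0
  have "gball E x 0 = {x}" unfolding gball_def using gdist_zero by auto
  then show ?case by simp
next
  case (Suc l)
  have "gball E x (Suc l) \<subseteq> gball E x l \<union> (\<Union>y\<in>gball E x l. {z. E y z})"
  proof
    fix z assume z: "z \<in> gball E x (Suc l)"
    show "z \<in> gball E x l \<union> (\<Union>y\<in>gball E x l. {z. E y z})"
    proof (cases "gdist E x z \<le> l")
      case True then show ?thesis unfolding gball_def by auto
    next
      case False
      then have g: "gdist E x z = Suc l" using z unfolding gball_def by auto
      obtain p where p: "p 0 = x" "p (gdist E x z) = z" "walk E p (gdist E x z)"
        using gdist_walk by blast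
      have "gdist E (p 0) (p l) \<le> l - 0" using gdist_sub[OF p(3), of 0 l] g by auto
      moreover have "E (p l) (p (Suc l))" using p(3) g unfolding walk_def by auto
      ultimately show ?thesis using p g unfolding gball_def by auto
    qed
  qed
  moreover have "finite (\<Union>y\<in>gball E x l. {z. E y z})"
    using Suc lf unfolding locally_finite_def by auto
  ultimately show ?case using Suc by (meson finite_Un finite_subset)
qed

lemma center_in_gball: "x \<in> gball E x l" unfolding gball_def by simp

lemma card_gball_pos: "card (gball E x l) \<ge> 1"
  using gball_finite center_in_gball by (metis One_nat_def Suc_leI card_gt_0_iff empty_iff)

lemma gball_mono: "l \<le> l' \<Longrightarrow> card (gball E x l) \<le> card (gball E x l')"
  by (rule card_mono[OF gball_finite]) (auto simp: gball_def)

lemma auto_gdist: assumes "graph_automorphism E \<sigma>"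
  shows "gdist E (\<sigma> a) (\<sigma> b) = gdist E a b"
proof -
  have b: "bij \<sigma>" and e: "\<And>a b. E a b \<longleftrightarrow> E (\<sigma> a) (\<sigma> b)"
    using assms unfolding graph_automorphism_def by auto
  obtain p where p: "p 0 = a" "p (gdist E a b) = b" "walk E p (gdist E a b)"
    using gdist_walk by blast
  have "walk E (\<sigma> \<circ> p) (gdist E a b)" using p(3) unfolding walk_def by (simp add: e[symmetric])
  then have 1: "gdist E (\<sigma> a) (\<sigma> b) \<le> gdist E a b"
    using gdist_le[of "\<sigma> \<circ> p"] p by auto
  obtain q where q: "q 0 = \<sigma> a" "q (gdist E (\<sigma> a) (\<sigma> b)) = \<sigma> b"
      "walk E q (gdist E (\<sigma> a) (\<sigma> b))"
    using gdist_walk by blast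
  have si: "\<sigma> (inv \<sigma> y) = y" for y using b by (simp add: bij_is_surj surj_f_inv_f)
  have isi: "inv \<sigma> (\<sigma> y) = y" for y using b by (simp add: bij_is_inj)
  have "walk E (inv \<sigma> \<circ> q) (gdist E (\<sigma> a) (\<sigma> b))" using q(3) unfolding walk_def
    by (metis comp_apply e si)
  then have "gdist E a b \<le> gdist E (\<sigma> a) (\<sigma> b)"
    using gdist_le[of "inv \<sigma> \<circ> q"] q isi by auto
  with 1 show ?thesis by simp
qed

lemma card_gball_vt: assumes vt: "vertex_transitive E"
  shows "card (gball E y l) = card (gball E x l)"
proof -
  obtain \<sigma> where s: "graph_automorphism E \<sigma>" "\<sigma> x = y" using vt unfolding vertex_transitive_def by blast
  have b: "bij \<sigma>" using s unfolding graph_automorphism_def by auto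
  have si: "\<sigma> (inv \<sigma> z) = z" for z using b by (simp add: bij_is_surj surj_f_inv_f)
  have "\<sigma> ` gball E x l = gball E y l"
  proof
    show "\<sigma> ` gball E x l \<subseteq> gball E y l" using auto_gdist[OF s(1)] s(2) unfolding gball_def by auto
    show "gball E y l \<subseteq> \<sigma> ` gball E x l"
    proof
      fix z assume "z \<in> gball E y l"
      then have "inv \<sigma> z \<in> gball E x l" using auto_gdist[OF s(1), of x "inv \<sigma> z"] s(2) si
        unfolding gball_def by auto
      then show "z \<in> \<sigma> ` gball E x l" using si by (metis image_eqI)
    qed
  qed
  then show ?thesis using card_image b by (metis bij_is_inj inj_on_subset subset_UNIV)
qed

end



context grph begin

lemma chain:
  assumes p: "p \<in> delta_paths E n \<delta> x0" and ab: "a \<le> b" "b \<le> n"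
  shows "real (gdist E (p!a) (p!b)) \<le> real (b - a) * \<delta>"
  using ab
proof (induction b)
  case 0 then show ?case by simp
next
  case (Suc b)
  show ?case
  proof (cases "a = Suc b")
    case True then show ?thesis by simp
  next
    case False
    then have ab: "a \<le> b" "b < n" using Suc by auto
    have 1: "real (gdist E (p!a) (p!b)) \<le> real (b - a) * \<delta>" using Suc ab by auto
    have 2: "real (gdist E (p!b) (p!Suc b)) \<le> \<delta>" using p ab unfolding delta_paths_def by auto
    have "gdist E (p!a) (p!Suc b) \<le> gdist E (p!a) (p!b) + gdist E (p!b) (p!Suc b)"
      by (rule gdist_triangle)
    then have "real (gdist E (p!a) (p!Suc b)) \<le> real (b - a) * \<delta> + \<delta>" using 1 2 by linarith
    also have "\<dots> = real (Suc b - a) * \<delta>" using ab by (simp add: Suc_diff_le algebra_simps)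
    finally show ?thesis .
  qed
qed

definition sk :: "'a \<Rightarrow> nat \<Rightarrow> nat \<Rightarrow> (nat \<Rightarrow> 'a) set" where
  "sk x K j = {t. t 0 = x \<and> (\<forall>i<j. gdist E (t i) (t (Suc i)) \<le> K) \<and> (\<forall>i>j. t i = x)}"

lemma sk_card: assumes vt: "vertex_transitive E"
  shows "finite (sk x K j) \<and> card (sk x K j) \<le> card (gball E x K) ^ j"
proof (induction j)
  case 0
  have "sk x K 0 = {\<lambda>i. x}"
  proof
    show "sk x K 0 \<subseteq> {\<lambda>i. x}"
    proof
      fix t assume "t \<in> sk x K 0"
      then have "t i = x" for i unfolding sk_def by (cases i) auto
      then show "t \<in> {\<lambda>i. x}" by auto
    qed
  qed (auto simp: sk_def)
  then show ?case by simp
next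
  case (Suc j)
  let ?f = "\<lambda>(t, z). t(Suc j := z)"
  let ?S = "Sigma (sk x K j) (\<lambda>t. gball E (t j) K)"
  have sub: "sk x K (Suc j) \<subseteq> ?f ` ?S"
  proof
    fix t' assume t': "t' \<in> sk x K (Suc j)"
    define t where "t = t'(Suc j := x)"
    have "t \<in> sk x K j" using t' unfolding sk_def t_def
      by (auto simp: less_Suc_eq)
    moreover have "t' (Suc j) \<in> gball E (t j) K" using t' unfolding sk_def t_def gball_def by auto
    moreover have "t' = ?f (t, t' (Suc j))" unfolding t_def by auto
    ultimately show "t' \<in> ?f ` ?S" by blast
  qed
  have fS: "finite ?S" using Suc gball_finite by auto
  have "card ?S = (\<Sum>t\<in>sk x K j. card (gball E (t j) K))"
    using Suc gball_finite by simp
  also have "\<dots> = (\<Sum>t\<in>sk x K j. card (gball E x K))"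
    by (rule sum.cong) (auto intro: card_gball_vt[OF vt])
  also have "\<dots> = card (sk x K j) * card (gball E x K)" by simp
  also have "\<dots> \<le> card (gball E x K) ^ Suc j" using Suc by simp
  finally have "card ?S \<le> card (gball E x K) ^ Suc j" .
  moreover have "card (sk x K (Suc j)) \<le> card ?S"
    using sub fS by (meson card_image_le card_mono finite_imageI le_trans)
  ultimately show ?case using sub fS by (meson finite_imageI finite_subset le_trans)
qed

lemma sep_upper:
  assumes vt: "vertex_transitive E" and k: "k \<ge> 1" and dpos: "\<delta> \<ge> 0"
    and R: "2 * real (k - 1) * \<delta> \<le> R"
    and K: "real k * \<delta> < real K + 1"
    and S: "S \<subseteq> delta_paths E n \<delta> x" "separated E R S"
  shows "card S \<le> card (gball E x K) ^ (n div k)"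
proof -
  define j where "j = n div k"
  define \<phi> where "\<phi> p = (\<lambda>i. if i \<le> j then p!(i*k) else x)" for p :: "'a list"
  have im: "\<phi> ` S \<subseteq> sk x K j"
  proof
    fix t assume "t \<in> \<phi> ` S"
    then obtain p where p: "p \<in> S" "t = \<phi> p" by auto
    have pd: "p \<in> delta_paths E n \<delta> x" using p S by auto
    have "t 0 = x" using pd p unfolding \<phi>_def delta_paths_def by auto
    moreover have "gdist E (t i) (t (Suc i)) \<le> K" if i: "i < j" for i
    proof -
      have le: "i * k \<le> Suc i * k" "Suc i * k \<le> n"
        using i unfolding j_def
      proof -
        have "Suc i * k \<le> (n div k) * k" using i unfolding j_def by (intro mult_le_mono1) simp
        also have "\<dots> \<le> n" by (simp add: div_times_less_eq_dividend)
        finally show "i * k \<le> Suc i * k" "Suc i * k \<le> n" by simp_all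
      qed
      have "real (gdist E (p!(i*k)) (p!(Suc i*k))) \<le> real (Suc i * k - i * k) * \<delta>"
        by (rule chain[OF pd le])
      also have "\<dots> = real k * \<delta>" by simp
      finally have "real (gdist E (p!(i*k)) (p!(Suc i*k))) < real K + 1" using K by linarith
      then show ?thesis using p i unfolding \<phi>_def by auto
    qed
    moreover have "t i = x" if "i > j" for i using that p unfolding \<phi>_def by auto
    ultimately show "t \<in> sk x K j" unfolding sk_def by auto
  qed
  have inj: "inj_on \<phi> S"
  proof (rule inj_onI, rule ccontr)
    fix p q assume p: "p \<in> S" and q: "q \<in> S" and eq: "\<phi> p = \<phi> q" and ne: "p \<noteq> q"
    have pd: "p \<in> delta_paths E n \<delta> x" and qd: "q \<in> delta_paths E n \<delta> x" using p q S by auto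
    have lp: "length p = Suc n" using pd unfolding delta_paths_def by auto
    have gt: "path_dist E p q > R" using S(2) p q ne unfolding separated_def by auto
    have "real (gdist E (p!i) (q!i)) \<le> R" if i: "i < Suc n" for i
    proof -
      define c where "c = i div k"
      have ck: "c * k \<le> i" unfolding c_def by (simp add: div_times_less_eq_dividend)
      have cj: "c \<le> j" unfolding c_def j_def using i by (simp add: div_le_mono)
      have e: "p!(c*k) = q!(c*k)" using fun_cong[OF eq, of c] cj unfolding \<phi>_def by auto
      have m: "i - c * k \<le> k - 1" unfolding c_def
      proof -
        have "i - i div k * k = i mod k" by (simp add: minus_div_mult_eq_mod)
        moreover have "i mod k < k" using k by simp
        ultimately show "i - i div k * k \<le> k - 1" by simp
      qed
      have in_: "i \<le> n" using i by simp
      have a: "real (gdist E (p!(c*k)) (p!i)) \<le> real (i - c*k) * \<delta>" by (rule chain[OF pd ck in_])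
      have b: "real (gdist E (q!(c*k)) (q!i)) \<le> real (i - c*k) * \<delta>" by (rule chain[OF qd ck in_])
      have "gdist E (p!i) (q!i) \<le> gdist E (p!i) (p!(c*k)) + gdist E (p!(c*k)) (q!i)"
        by (rule gdist_triangle)
      then have "real (gdist E (p!i) (q!i)) \<le> real (gdist E (p!(c*k)) (p!i)) + real (gdist E (q!(c*k)) (q!i))"
        using e gdist_sym by (metis of_nat_add of_nat_mono)
      also have "\<dots> \<le> 2 * (real (i - c*k) * \<delta>)" using a b by linarith
      also have "\<dots> \<le> 2 * (real (k - 1) * \<delta>)" using m dpos
        by (simp add: mult_right_mono)
      finally show ?thesis using R by linarith
    qed
    then have "path_dist E p q \<le> R" unfolding path_dist_def lp
      by (subst Max_le_iff) auto
    with gt show False by simp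
  qed
  have "card S = card (\<phi> ` S)" using inj by (simp add: card_image)
  also have "\<dots> \<le> card (sk x K j)" using im sk_card[OF vt] by (simp add: card_mono)
  also have "\<dots> \<le> card (gball E x K) ^ j" using sk_card[OF vt] by simp
  finally show ?thesis unfolding j_def .
qed

end



context grph begin

lemma sep_ge1: assumes "\<delta> \<ge> 0" shows "sep_count E n R \<delta> x0 \<ge> 1"
proof -
  let ?p = "replicate (Suc n) x0"
  have "?p \<in> delta_paths E n \<delta> x0" using assms unfolding delta_paths_def by (auto simp del: replicate.simps)
  then have "ereal (real (card {?p})) \<in> {ereal (real (card S)) | S.
      finite S \<and> S \<subseteq> delta_paths E n \<delta> x0 \<and> separated E R S}"
    unfolding separated_def by blast
  then have "ereal (real (card {?p})) \<le> sep_count E n R \<delta> x0"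
    unfolding sep_count_def by (rule Sup_upper)
  then show ?thesis by (simp add: one_ereal_def)
qed

lemma sep_upper_count:
  assumes vt: "vertex_transitive E" and k: "k \<ge> 1" and dpos: "\<delta> \<ge> 0"
    and R: "2 * real (k - 1) * \<delta> \<le> R"
    and K: "real k * \<delta> < real K + 1"
  shows "sep_count E n R \<delta> x \<le> ereal (real (card (gball E x K) ^ (n div k)))"
  unfolding sep_count_def
proof (rule Sup_least)
  fix y assume "y \<in> {ereal (real (card S)) | S. finite S \<and> S \<subseteq> delta_paths E n \<delta> x \<and> separated E R S}"
  then obtain S where S: "y = ereal (real (card S))" "S \<subseteq> delta_paths E n \<delta> x" "separated E R S"
    by auto
  show "y \<le> ereal (real (card (gball E x K) ^ (n div k)))"
    using sep_upper[OF vt k dpos R K S(2,3)] S(1) by simp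
qed

lemma gt_nonneg: assumes "\<delta> \<ge> 0" shows "growth_term E n R \<delta> x0 \<ge> 0"
proof -
  let ?s = "sep_count E n R \<delta> x0"
  have s1: "?s \<ge> 1" by (rule sep_ge1[OF assms])
  show ?thesis
  proof (cases "?s = \<infinity>")
    case True then show ?thesis unfolding growth_term_def Let_def by simp
  next
    case False
    obtain r where r: "?s = ereal r" using False s1 by (cases ?s) auto
    then have "real_of_ereal ?s \<ge> 1" using s1 by simp
    then have "ln (real_of_ereal ?s) / real n \<ge> 0" by simp
    then show ?thesis using False unfolding growth_term_def Let_def by simp
  qed
qed

lemma gt_upper: assumes "\<delta> \<ge> 0" and s: "sep_count E n R \<delta> x0 \<le> ereal B"
  shows "growth_term E n R \<delta> x0 \<le> ereal (ln B / real n)"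
proof -
  let ?s = "sep_count E n R \<delta> x0"
  have s1: "?s \<ge> 1" by (rule sep_ge1[OF assms(1)])
  have fin: "?s \<noteq> \<infinity>" using s by auto
  obtain r where r: "?s = ereal r" using fin s1 by (cases ?s) auto
  have r1: "real_of_ereal ?s \<ge> 1" using s1 r by simp
  have "real_of_ereal ?s \<le> B" using s r by simp
  then have "ln (real_of_ereal ?s) \<le> ln B" using r1 by simp
  then have "ln (real_of_ereal ?s) / real n \<le> ln B / real n" by (simp add: divide_right_mono)
  then show ?thesis using fin unfolding growth_term_def Let_def by simp
qed

end



context grph begin

lemma part_i_inner:
  assumes vt: "vertex_transitive E"
    and h: "(\<lambda>l::nat. ln (real (card (gball E x l))) / real l) \<longlonglongrightarrow> 0"
    and d: "\<delta> \<ge> 1"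
  shows "((\<lambda>R. limsup (\<lambda>n. growth_term E n R \<delta> x)) \<longlongrightarrow> 0) at_top"
proof -
  define k where "k R = nat \<lfloor>R / (2 * \<delta>)\<rfloor> + 1" for R :: real
  define K where "K R = nat \<lfloor>real (k R) * \<delta>\<rfloor>" for R
  define hh where "hh l = ln (real (card (gball E x l))) / real l" for l
  have hh0: "hh l \<ge> 0" for l unfolding hh_def using card_gball_pos[of x l] by simp
  have up: "limsup (\<lambda>n. growth_term E n R \<delta> x) \<le> ereal (\<delta> * hh (K R))" if R: "R \<ge> 0" for R
  proof (rule Limsup_bounded, rule always_eventually, rule allI)
    fix n
    define b where "b = card (gball E x (K R))"
    have b1: "b \<ge> 1" unfolding b_def by (rule card_gball_pos)
    have k1: "k R \<ge> 1" unfolding k_def by simp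
    have kR: "2 * real (k R - 1) * \<delta> \<le> R"
    proof -
      have "real (k R - 1) = real (nat \<lfloor>R / (2 * \<delta>)\<rfloor>)" unfolding k_def by simp
      also have "\<dots> \<le> R / (2 * \<delta>)" using R d by simp
      finally show ?thesis using d by (simp add: field_simps)
    qed
    have kK: "real (k R) * \<delta> < real (K R) + 1" unfolding K_def using d
      by (simp add: of_nat_nat)
    have kK2: "real (K R) \<le> real (k R) * \<delta>" unfolding K_def using d by simp
    have Kpos: "K R \<ge> 1"
    proof -
      have "real (k R) \<ge> 1" using k1 by simp
      then have "real (k R) * \<delta> \<ge> 1 * 1" using mult_mono[of 1 "real (k R)" 1 \<delta>] d by simp
      then show ?thesis unfolding K_def by linarith
    qed
    have "growth_term E n R \<delta> x \<le> ereal (ln (real (b ^ (n div k R))) / real n)"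
      using gt_upper[of \<delta> n R x] sep_upper_count[OF vt k1 _ kR kK, of n] d unfolding b_def by simp
    also have "ln (real (b ^ (n div k R))) / real n \<le> ln (real b) / real (k R)"
    proof (cases "n = 0")
      case True then show ?thesis using b1 by simp
    next
      case False
      have lb: "ln (real b) \<ge> 0" using b1 by simp
      have "ln (real (b ^ (n div k R))) = real (n div k R) * ln (real b)"
        using b1 by (simp add: ln_realpow)
      moreover have "real (n div k R) / real n \<le> 1 / real (k R)"
      proof -
        have "n div k R * k R \<le> n" by (simp add: div_times_less_eq_dividend)
        then have "real (n div k R * k R) \<le> real n" by (rule of_nat_mono)
        then have "real (n div k R) * real (k R) \<le> real n" by simp
        then show ?thesis using False k1 by (simp add: field_simps)
      qed
      then have "ln (real b) * (real (n div k R) / real n) \<le> ln (real b) * (1 / real (k R))"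
        using lb by (rule mult_left_mono)
      ultimately show ?thesis by (simp add: field_simps)
    qed
    also have "ln (real b) / real (k R) \<le> \<delta> * hh (K R)"
    proof -
      have "ln (real b) = hh (K R) * real (K R)" unfolding hh_def b_def using Kpos by simp
      then have "ln (real b) / real (k R) = hh (K R) * (real (K R) / real (k R))" by simp
      also have "\<dots> \<le> hh (K R) * \<delta>"
        using kK2 k1 hh0 by (intro mult_left_mono) (simp_all add: field_simps)
      finally show ?thesis by (simp add: mult.commute)
    qed
    finally show "growth_term E n R \<delta> x \<le> ereal (\<delta> * hh (K R))" by simp
  qed
  have low: "limsup (\<lambda>n. growth_term E n R \<delta> x) \<ge> 0" for R
    by (rule le_Limsup) (use gt_nonneg d in auto)
  have Klim: "filterlim K at_top at_top"
    unfolding filterlim_at_top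
  proof (intro allI)
    fix Z :: nat
    have "eventually (\<lambda>R. R \<ge> 2 * \<delta> * real Z) at_top" by (rule eventually_ge_at_top)
    then show "eventually (\<lambda>R. K R \<ge> Z) at_top"
    proof (rule eventually_mono)
      fix R assume R: "R \<ge> 2 * \<delta> * real Z"
      have "R / (2 * \<delta>) \<ge> real Z" using R d by (simp add: field_simps)
      then have "nat \<lfloor>R / (2 * \<delta>)\<rfloor> \<ge> Z" by linarith
      then have "real (k R) \<ge> real Z" unfolding k_def by simp
      moreover have "real (k R) * 1 \<le> real (k R) * \<delta>" using d by (intro mult_left_mono) auto
      ultimately have "real (k R) * \<delta> \<ge> real Z" by simp
      then show "K R \<ge> Z" unfolding K_def by linarith
    qed
  qed
  have "(hh \<longlongrightarrow> 0) sequentially" using h unfolding hh_def .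
  then have "((\<lambda>R. hh (K R)) \<longlongrightarrow> 0) at_top" by (rule filterlim_compose[OF _ Klim])
  then have "((\<lambda>R. \<delta> * hh (K R)) \<longlongrightarrow> 0) at_top" by (rule tendsto_mult_right_zero)
  then have t: "((\<lambda>R. ereal (\<delta> * hh (K R))) \<longlongrightarrow> 0) at_top"
    using tendsto_ereal by (metis zero_ereal_def)
  show ?thesis
  proof (rule tendsto_sandwich[OF _ _ tendsto_const t])
    show "\<forall>\<^sub>F R in at_top. 0 \<le> limsup (\<lambda>n. growth_term E n R \<delta> x)" using low by simp
    show "\<forall>\<^sub>F R in at_top. limsup (\<lambda>n. growth_term E n R \<delta> x) \<le> ereal (\<delta> * hh (K R))"
      using eventually_ge_at_top[of "0::real"] by eventually_elim (rule up)
  qed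
qed

end



context grph begin

lemma greedy:
  assumes vt: "vertex_transitive E" and A: "finite A"
  shows "\<exists>T\<subseteq>A. (\<forall>a\<in>T. \<forall>b\<in>T. a \<noteq> b \<longrightarrow> gdist E a b > r) \<and>
            card A \<le> card T * card (gball E x r)"
  using A
proof (induction A rule: finite_psubset_induct)
  case (psubset A)
  show ?case
  proof (cases "A = {}")
    case True then show ?thesis by auto
  next
    case False
    then obtain a where a: "a \<in> A" by auto
    define A' where "A' = A - gball E a r"
    have a': "a \<notin> A'" unfolding A'_def gball_def by simp
    have fA': "finite A'" using psubset.hyps unfolding A'_def by simp
    have "A' \<subset> A" using a a' unfolding A'_def by auto
    from psubset.IH[OF this] obtain T' where T': "T' \<subseteq> A'" "\<forall>a\<in>T'. \<forall>b\<in>T'. a \<noteq> b \<longrightarrow> gdist E a b > r"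
      "card A' \<le> card T' * card (gball E x r)"
      by blast
    define T where "T = insert a T'"
    have aT': "a \<notin> T'" using T' a' by auto
    have fT': "finite T'" using T'(1) fA' finite_subset by auto
    have "T \<subseteq> A" using T' a unfolding T_def A'_def by auto
    moreover have "\<forall>u\<in>T. \<forall>v\<in>T. u \<noteq> v \<longrightarrow> gdist E u v > r"
    proof (intro ballI impI)
      fix u v assume u: "u \<in> T" and v: "v \<in> T" and uv: "u \<noteq> v"
      have far: "gdist E a t > r" if "t \<in> T'" for t
        using that T'(1) unfolding A'_def gball_def by auto
      have "u = a \<or> u \<in> T'" "v = a \<or> v \<in> T'" using u v unfolding T_def by auto
      then show "gdist E u v > r"
      proof (elim disjE)
        assume "u = a" "v = a" then show ?thesis using uv by simp
      next
        assume "u = a" "v \<in> T'" then show ?thesis using far by simp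
      next
        assume "u \<in> T'" "v = a" then show ?thesis using far[of u] gdist_sym[of u v] by simp
      next
        assume "u \<in> T'" "v \<in> T'" then show ?thesis using T'(2) uv by blast
      qed
    qed
    moreover have "card A \<le> card T * card (gball E x r)"
    proof -
      have "A \<subseteq> (A \<inter> gball E a r) \<union> A'" unfolding A'_def by auto
      then have "card A \<le> card ((A \<inter> gball E a r) \<union> A')"
        using fA' psubset.hyps by (intro card_mono) auto
      also have "\<dots> \<le> card (A \<inter> gball E a r) + card A'" by (rule card_Un_le)
      finally have "card A \<le> card (A \<inter> gball E a r) + card A'" .
      also have "card (A \<inter> gball E a r) \<le> card (gball E x r)"
        using card_mono[OF gball_finite, of "A \<inter> gball E a r" a r] card_gball_vt[OF vt, of a r x] by auto
      finally show ?thesis using T'(3) aT' fT' unfolding T_def by simp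
    qed
    ultimately show ?thesis by blast
  qed
qed

definition gw :: "'a \<Rightarrow> 'a \<Rightarrow> nat \<Rightarrow> 'a" where
  "gw y z = (SOME p. p 0 = y \<and> p (gdist E y z) = z \<and> walk E p (gdist E y z))"

lemma gw: "gw y z 0 = y" "gw y z (gdist E y z) = z" "walk E (gw y z) (gdist E y z)"
  using someI_ex[OF gdist_walk[of y z]] unfolding gw_def by auto

definition seg :: "nat \<Rightarrow> 'a \<Rightarrow> 'a \<Rightarrow> nat \<Rightarrow> 'a" where
  "seg d y z i = gw y z (min (i * d) (gdist E y z))"

lemma seg0: "seg d y z 0 = y" unfolding seg_def using gw by simp

lemma seg_end: "gdist E y z \<le> k * d \<Longrightarrow> i \<ge> k \<Longrightarrow> seg d y z i = z"
proof -
  assume a: "gdist E y z \<le> k * d" "i \<ge> k"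
  then have "gdist E y z \<le> i * d" by (meson le_trans mult_le_mono1)
  then show ?thesis unfolding seg_def using gw by (simp add: min_absorb2)
qed

lemma seg_step: "gdist E (seg d y z i) (seg d y z (Suc i)) \<le> d"
proof -
  let ?m = "gdist E y z"
  have "gdist E (gw y z (min (i*d) ?m)) (gw y z (min (Suc i*d) ?m)) \<le> min (Suc i*d) ?m - min (i*d) ?m"
    by (rule gdist_sub[OF gw(3)]) auto
  also have "\<dots> \<le> d" by auto
  finally show ?thesis unfolding seg_def .
qed


primrec Fs :: "('a \<Rightarrow> 'a set) \<Rightarrow> nat \<Rightarrow> nat \<Rightarrow> 'a \<Rightarrow> nat \<Rightarrow> (nat \<Rightarrow> 'a) set" where
  "Fs T d k x 0 = {\<lambda>i. x}"
| "Fs T d k x (Suc j) = (\<lambda>(f, z). (\<lambda>i. if i \<le> j * k then f i else seg d (f (j * k)) z (i - j * k)))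
      ` Sigma (Fs T d k x j) (\<lambda>f. T (f (j * k)))"

lemma Fs_props:
  assumes k: "k \<ge> 1"
    and Tb: "\<And>y. T y \<subseteq> gball E y (k * d)"
    and Ts: "\<forall>y a b. a \<in> T y \<longrightarrow> b \<in> T y \<longrightarrow> a \<noteq> b \<longrightarrow> gdist E a b > r"
    and TM: "\<And>y. real (card (T y)) \<ge> M" and M: "M \<ge> 0"
  shows "(\<forall>f\<in>Fs T d k x j. f 0 = x \<and> (\<forall>i<j*k. gdist E (f i) (f (Suc i)) \<le> d)
            \<and> (\<forall>i\<ge>j*k. f i = f (j*k)))
         \<and> (\<forall>f\<in>Fs T d k x j. \<forall>g\<in>Fs T d k x j. f \<noteq> g \<longrightarrow> (\<exists>i\<le>j*k. gdist E (f i) (g i) > r))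
         \<and> finite (Fs T d k x j) \<and> real (card (Fs T d k x j)) \<ge> M ^ j"
proof (induction j)
  case 0 then show ?case by simp
next
  case (Suc j)
  let ?F = "Fs T d k x j"
  let ?e = "\<lambda>(f, z). (\<lambda>i. if i \<le> j * k then f i else seg d (f (j * k)) z (i - j * k))"
  let ?S = "Sigma ?F (\<lambda>f. T (f (j * k)))"
  have IH1: "\<And>f. f \<in> ?F \<Longrightarrow> f 0 = x" and IH2: "\<And>f i. f \<in> ?F \<Longrightarrow> i < j*k \<Longrightarrow> gdist E (f i) (f (Suc i)) \<le> d"
    and IH3: "\<And>f i. f \<in> ?F \<Longrightarrow> i \<ge> j*k \<Longrightarrow> f i = f (j*k)"
    and IH4: "\<And>f g. f \<in> ?F \<Longrightarrow> g \<in> ?F \<Longrightarrow> f \<noteq> g \<Longrightarrow> \<exists>i\<le>j*k. gdist E (f i) (g i) > r"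
    and IH5: "finite ?F" and IH6: "real (card ?F) \<ge> M ^ j"
    using Suc.IH by blast+
  have fT: "finite (T y)" for y using Tb gball_finite finite_subset by metis
  have eq_ge: "?e (f, z) i = seg d (f (j*k)) z (i - j*k)" if "f \<in> ?F" "i \<ge> j*k" for f z i
  proof (cases "i = j * k")
    case True then show ?thesis using seg0 by simp
  next
    case False then show ?thesis using that by simp
  qed
  have eq_end: "?e (f, z) i = z" if "f \<in> ?F" "z \<in> T (f (j*k))" "i \<ge> Suc j * k" for f z i
  proof -
    have "gdist E (f (j*k)) z \<le> k * d" using Tb that(2) unfolding gball_def by auto
    moreover have "i - j * k \<ge> k" using that(3) by simp
    moreover have "i \<ge> j * k" using that(3) by simp
    ultimately show ?thesis using eq_ge[OF that(1)] seg_end by simp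
  qed
  have P1: "\<forall>f\<in>Fs T d k x (Suc j). f 0 = x \<and> (\<forall>i<Suc j*k. gdist E (f i) (f (Suc i)) \<le> d)
            \<and> (\<forall>i\<ge>Suc j*k. f i = f (Suc j*k))"
  proof
    fix h assume "h \<in> Fs T d k x (Suc j)"
    then obtain f z where fz: "f \<in> ?F" "z \<in> T (f (j*k))" and h: "h = ?e (f, z)" by auto
    have "h 0 = x" using h IH1[OF fz(1)] by simp
    moreover have "gdist E (h i) (h (Suc i)) \<le> d" if i: "i < Suc j * k" for i
    proof (cases "i < j * k")
      case True then show ?thesis using h IH2[OF fz(1)] by simp
    next
      case False
      then have "h i = seg d (f (j*k)) z (i - j*k)" "h (Suc i) = seg d (f (j*k)) z (Suc (i - j*k))"
        using h eq_ge[OF fz(1)] by (simp_all add: Suc_diff_le)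
      then show ?thesis using seg_step by simp
    qed
    moreover have "h i = h (Suc j * k)" if "i \<ge> Suc j * k" for i
    proof -
      have "h i = z" unfolding h by (rule eq_end[OF fz that])
      moreover have "h (Suc j * k) = z" unfolding h by (rule eq_end[OF fz order_refl])
      ultimately show ?thesis by simp
    qed
    ultimately show "h 0 = x \<and> (\<forall>i<Suc j*k. gdist E (h i) (h (Suc i)) \<le> d)
            \<and> (\<forall>i\<ge>Suc j*k. h i = h (Suc j*k))" by blast
  qed
  have P2: "\<forall>f\<in>Fs T d k x (Suc j). \<forall>g\<in>Fs T d k x (Suc j). f \<noteq> g \<longrightarrow> (\<exists>i\<le>Suc j*k. gdist E (f i) (g i) > r)"
  proof (intro ballI impI)
    fix h h' assume "h \<in> Fs T d k x (Suc j)" "h' \<in> Fs T d k x (Suc j)" and ne: "h \<noteq> h'"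
    then obtain f z f' z' where fz: "f \<in> ?F" "z \<in> T (f (j*k))" and h: "h = ?e (f, z)"
      and fz': "f' \<in> ?F" "z' \<in> T (f' (j*k))" and h': "h' = ?e (f', z')" by auto
    show "\<exists>i\<le>Suc j*k. gdist E (h i) (h' i) > r"
    proof (cases "f = f'")
      case False
      then obtain i where "i \<le> j*k" "gdist E (f i) (f' i) > r" using IH4[OF fz(1) fz'(1)] by blast
      then show ?thesis using h h' by (intro exI[of _ i]) auto
    next
      case True
      then have "z \<noteq> z'" using ne h h' by auto
      then have "gdist E z z' > r" using Ts fz(2) fz'(2) True by blast
      moreover have "h (Suc j * k) = z" unfolding h by (rule eq_end[OF fz order_refl])
      moreover have "h' (Suc j * k) = z'" unfolding h' by (rule eq_end[OF fz' order_refl])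
      ultimately show ?thesis by (intro exI[of _ "Suc j * k"]) auto
    qed
  qed
  have inj: "inj_on ?e ?S"
  proof (rule inj_onI)
    fix p q assume p: "p \<in> ?S" and q: "q \<in> ?S" and eq: "?e p = ?e q"
    obtain f z where pf: "p = (f, z)" "f \<in> ?F" "z \<in> T (f (j*k))" using p by auto
    obtain g w where qg: "q = (g, w)" "g \<in> ?F" "w \<in> T (g (j*k))" using q by auto
    have fg: "f i = g i" for i
    proof (cases "i \<le> j * k")
      case True then show ?thesis using fun_cong[OF eq, of i] pf qg by simp
    next
      case False
      then have "f i = f (j*k)" "g i = g (j*k)" using IH3 pf qg by auto
      moreover have "f (j*k) = g (j*k)" using fun_cong[OF eq, of "j*k"] pf qg by simp
      ultimately show ?thesis by simp
    qed
    then have "f = g" by auto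
    moreover have "z = w"
    proof -
      have "?e (f, z) (Suc j * k) = z" by (rule eq_end[OF pf(2,3) order_refl])
      moreover have "?e (g, w) (Suc j * k) = w" by (rule eq_end[OF qg(2,3) order_refl])
      ultimately show ?thesis using fun_cong[OF eq, of "Suc j * k"] pf(1) qg(1) by simp
    qed
    ultimately show "p = q" using pf qg by simp
  qed
  have fS: "finite ?S" using IH5 fT by auto
  have P3: "finite (Fs T d k x (Suc j))" using fS by simp
  have "card (Fs T d k x (Suc j)) = card ?S" using inj by (simp add: card_image)
  also have "\<dots> = (\<Sum>f\<in>?F. card (T (f (j*k))))" using IH5 fT by simp
  finally have "real (card (Fs T d k x (Suc j))) = (\<Sum>f\<in>?F. real (card (T (f (j*k)))))" by simp
  also have "\<dots> \<ge> (\<Sum>f\<in>?F. M)" by (rule sum_mono) (rule TM)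
  finally have "real (card (Fs T d k x (Suc j))) \<ge> real (card ?F) * M" by simp
  moreover have "real (card ?F) * M \<ge> M ^ j * M" using IH6 M by (simp add: mult_right_mono)
  ultimately have P4: "real (card (Fs T d k x (Suc j))) \<ge> M ^ Suc j" by (simp add: mult.commute)
  show ?case using P1 P2 P3 P4 by blast
qed

end



context grph begin

lemma sep_lower:
  assumes vt: "vertex_transitive E" and k: "k \<ge> 1" and d: "real d \<le> \<delta>"
    and r: "R \<le> real r"
  shows "sep_count E (j*k) R \<delta> x \<ge>
     ereal ((real (card (gball E x (k*d))) / real (card (gball E x r))) ^ j)"
proof -
  define c where "c = card (gball E x r)"
  have c1: "c \<ge> 1" unfolding c_def by (rule card_gball_pos)
  define M where "M = real (card (gball E x (k*d))) / real c"
  have M0: "M \<ge> 0" unfolding M_def by simp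
  have "\<forall>y. \<exists>T. T \<subseteq> gball E y (k*d) \<and> (\<forall>a\<in>T. \<forall>b\<in>T. a \<noteq> b \<longrightarrow> gdist E a b > r) \<and>
            card (gball E y (k*d)) \<le> card T * c"
    unfolding c_def using greedy[OF vt gball_finite] by blast
  then obtain T where T: "\<And>y. T y \<subseteq> gball E y (k*d)"
    "\<And>y a b. a \<in> T y \<Longrightarrow> b \<in> T y \<Longrightarrow> a \<noteq> b \<Longrightarrow> gdist E a b > r"
    "\<And>y. card (gball E y (k*d)) \<le> card (T y) * c"
    by metis
  have TM: "real (card (T y)) \<ge> M" for y
  proof -
    have "card (gball E x (k*d)) \<le> card (T y) * c" using T(3)[of y] card_gball_vt[OF vt, of y "k*d" x] by simp
    then have "real (card (gball E x (k*d))) \<le> real (card (T y)) * real c" by (metis of_nat_mono of_nat_mult)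
    then show ?thesis unfolding M_def using c1 by (simp add: field_simps)
  qed
  have Ts: "\<forall>y a b. a \<in> T y \<longrightarrow> b \<in> T y \<longrightarrow> a \<noteq> b \<longrightarrow> gdist E a b > r"
    using T(2) by blast
  note FP = Fs_props[of k T d r M x j, OF k T(1) Ts TM M0]
  let ?F = "Fs T d k x j"
  let ?L = "(\<lambda>f. map f [0..<Suc (j*k)]) ` ?F"
  have finL: "finite ?L" using FP by simp
  have subL: "?L \<subseteq> delta_paths E (j*k) \<delta> x"
  proof
    fix p assume "p \<in> ?L"
    then obtain f where f: "f \<in> ?F" "p = map f [0..<Suc (j*k)]" by auto
    have "real (gdist E (p!i) (p!Suc i)) \<le> \<delta>" if "i < j*k" for i
    proof -
      have "gdist E (f i) (f (Suc i)) \<le> d" using FP f(1) that by blast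
      then have "real (gdist E (f i) (f (Suc i))) \<le> real d" by simp
      then show ?thesis using f(2) that d by (simp del: upt_Suc add: nth_append)
    qed
    moreover have "p ! 0 = x" using f FP by (simp del: upt_Suc)
    ultimately show "p \<in> delta_paths E (j*k) \<delta> x" using f unfolding delta_paths_def by simp
  qed
  have sepL: "separated E R ?L" unfolding separated_def
  proof (intro ballI impI)
    fix p q assume p: "p \<in> ?L" and q: "q \<in> ?L" and ne: "p \<noteq> q"
    obtain f where f: "f \<in> ?F" "p = map f [0..<Suc (j*k)]" using p by auto
    obtain g where g: "g \<in> ?F" "q = map g [0..<Suc (j*k)]" using q by auto
    have "f \<noteq> g" using ne f g by auto
    then obtain i where i: "i \<le> j*k" "gdist E (f i) (g i) > r" using FP f(1) g(1) by blast
    have "real (gdist E (p!i) (q!i)) \<in> {real (gdist E (p ! i) (q ! i)) | i. i < length p}"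
      using i f by auto
    then have "real (gdist E (p!i) (q!i)) \<le> path_dist E p q" unfolding path_dist_def
      by (intro Max_ge) auto
    moreover have "real (gdist E (p!i) (q!i)) > R" using i f g r
      by (simp del: upt_Suc add: nth_append)
    ultimately show "path_dist E p q > R" by simp
  qed
  have injL: "inj_on (\<lambda>f. map f [0..<Suc (j*k)]) ?F"
  proof (rule inj_onI)
    fix f g assume f: "f \<in> ?F" and g: "g \<in> ?F" and eq: "map f [0..<Suc (j*k)] = map g [0..<Suc (j*k)]"
    have le: "f i = g i" if "i \<le> j*k" for i
    proof -
      have "map f [0..<Suc (j*k)] ! i = map g [0..<Suc (j*k)] ! i" by (simp only: eq)
      then show ?thesis using that by (simp del: upt_Suc add: nth_append)
    qed
    have "f i = g i" for i
    proof (cases "i \<le> j*k")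
      case True then show ?thesis by (rule le)
    next
      case False
      then have "f i = f (j*k)" "g i = g (j*k)" using FP f g by auto
      then show ?thesis using le[of "j*k"] by simp
    qed
    then show "f = g" by auto
  qed
  have "ereal (real (card ?L)) \<le> sep_count E (j*k) R \<delta> x"
    unfolding sep_count_def by (rule Sup_upper) (use finL subL sepL in blast)
  moreover have "card ?L = card ?F" using injL by (simp add: card_image)
  moreover have "real (card ?F) \<ge> M ^ j" using FP by blast
  ultimately have "ereal (M ^ j) \<le> sep_count E (j*k) R \<delta> x"
    by (metis ereal_less_eq(3) order_trans)
  then show ?thesis unfolding M_def c_def .
qed

lemma gt_lower:
  assumes d: "\<delta> \<ge> 0" and s: "sep_count E (j*k) R \<delta> x0 \<ge> ereal (M ^ j)" and M: "M > 0"
    and j: "j \<ge> 1" and k: "k \<ge> 1"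
  shows "growth_term E (j*k) R \<delta> x0 \<ge> ereal (ln M / real k)"
proof -
  let ?s = "sep_count E (j*k) R \<delta> x0"
  show ?thesis
  proof (cases "?s = \<infinity>")
    case True then show ?thesis unfolding growth_term_def Let_def by simp
  next
    case False
    obtain r where r: "?s = ereal r" using False sep_ge1[OF d, of "j*k" R x0] by (cases ?s) auto
    have "r \<ge> M ^ j" using s r by simp
    moreover have "M ^ j > 0" using M by simp
    ultimately have "ln r \<ge> ln (M ^ j)" by simp
    then have "ln r \<ge> real j * ln M" using M by (simp add: ln_realpow)
    then have "ln r / (real j * real k) \<ge> real j * ln M / (real j * real k)"
      using j k by (intro divide_right_mono) simp_all
    moreover have "real j * ln M / (real j * real k) = ln M / real k" using j by simp
    ultimately have "ln r / real (j*k) \<ge> ln M / real k" by simp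
    then show ?thesis using False r unfolding growth_term_def Let_def by simp
  qed
qed

lemma limsup_lower:
  assumes vt: "vertex_transitive E" and k: "k \<ge> 1" and d: "real d \<le> \<delta>" "d \<ge> 1"
    and r: "R \<le> real r"
    and M: "M = real (card (gball E x (k*d))) / real (card (gball E x r))"
  shows "limsup (\<lambda>n. growth_term E n R \<delta> x) \<ge> ereal (ln M / real k)"
proof -
  have "card (gball E x (k*d)) \<ge> 1" "card (gball E x r) \<ge> 1" by (rule card_gball_pos)+
  then have Mpos: "M > 0" unfolding M by (intro divide_pos_pos) simp_all
  have dd: "\<delta> \<ge> 0" using d by simp
  define \<rho> where "\<rho> j = Suc j * k" for j
  have sm: "strict_mono \<rho>" unfolding \<rho>_def strict_mono_def using k by simp
  have "ereal (ln M / real k) \<le> limsup ((\<lambda>n. growth_term E n R \<delta> x) \<circ> \<rho>)"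
  proof (rule le_Limsup)
    show "\<forall>\<^sub>F j in sequentially. ereal (ln M / real k) \<le> ((\<lambda>n. growth_term E n R \<delta> x) \<circ> \<rho>) j"
    proof (rule always_eventually, rule allI)
      fix j
      show "ereal (ln M / real k) \<le> ((\<lambda>n. growth_term E n R \<delta> x) \<circ> \<rho>) j"
        unfolding \<rho>_def comp_def
        using gt_lower[OF dd sep_lower[OF vt k d(1) r, where j="Suc j"] _ _ k] Mpos unfolding M by simp
    qed
  qed simp
  also have "\<dots> \<le> limsup (\<lambda>n. growth_term E n R \<delta> x)" by (rule limsup_subseq_mono[OF sm])
  finally show ?thesis .
qed

end



context grph begin

lemma part_ii_R:
  assumes vt: "vertex_transitive E" and c: "c > 0"
    and freq: "\<forall>N. \<exists>l\<ge>N. ln (real (card (gball E x l))) / real l > c"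
    and dl: "\<delta> \<ge> 1"
  shows "limsup (\<lambda>n. growth_term E n R \<delta> x) \<ge> ereal (c * real (nat \<lfloor>\<delta>\<rfloor>) / 4)"
proof -
  define d where "d = nat \<lfloor>\<delta>\<rfloor>"
  have d1: "d \<ge> 1" unfolding d_def using dl by linarith
  have dd: "real d \<le> \<delta>" unfolding d_def using dl by linarith
  define r where "r = nat \<lceil>R\<rceil>"
  have rR: "R \<le> real r" unfolding r_def by linarith
  define cr where "cr = card (gball E x r)"
  have cr1: "cr \<ge> 1" unfolding cr_def by (rule card_gball_pos)
  obtain l where l: "l \<ge> d + nat \<lceil>2 * ln (real cr) / c\<rceil>"
    and hl: "ln (real (card (gball E x l))) / real l > c" using freq by blast
  have ld: "l \<ge> d" using l by simp
  have lpos: "real l > 0" using ld d1 by simp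
  have hl2: "ln (real (card (gball E x l))) > c * real l" using hl lpos by (simp add: field_simps)
  have "real l \<ge> 2 * ln (real cr) / c" using l by linarith
  then have lcr: "ln (real cr) \<le> c * real l / 2" using c by (simp add: field_simps)
  define k where "k = l div d + 1"
  have k1: "k \<ge> 1" unfolding k_def by simp
  have kdeq: "k * d = l div d * d + d" unfolding k_def by (simp add: algebra_simps)
  have "l = l div d * d + l mod d" by simp
  moreover have "l mod d < d" using d1 by simp
  ultimately have kd: "k * d > l" using kdeq by linarith
  have "l div d * d \<le> l" by (simp add: div_times_less_eq_dividend)
  then have kd2: "k * d \<le> 2 * l" using kdeq ld by linarith
  define M where "M = real (card (gball E x (k*d))) / real cr"
  have B1: "card (gball E x (k*d)) \<ge> card (gball E x l)" using kd by (intro gball_mono) simp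
  have Bl1: "card (gball E x l) \<ge> 1" by (rule card_gball_pos)
  have "ln M = ln (real (card (gball E x (k*d)))) - ln (real cr)"
    unfolding M_def using cr1 B1 Bl1 by (simp add: ln_div)
  also have "\<dots> \<ge> ln (real (card (gball E x l))) - ln (real cr)" using B1 Bl1 by simp
  finally have lnM: "ln M > c * real l / 2" using hl2 lcr by linarith
  have "ln M / real k \<ge> c * real d / 4"
  proof -
    have "real (k * d) \<le> real (2 * l)" using kd2 by (rule of_nat_mono)
    then have kr: "real k * real d \<le> 2 * real l" by simp
    have "c * real d / 4 * real k = c * (real k * real d) / 4" by simp
    also have "\<dots> \<le> c * (2 * real l) / 4" using kr c by (intro divide_right_mono mult_left_mono) simp_all
    also have "\<dots> = c * real l / 2" by simp
    also have "\<dots> \<le> ln M" using lnM by simp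
    finally show ?thesis using k1 by (simp add: field_simps)
  qed
  moreover have "limsup (\<lambda>n. growth_term E n R \<delta> x) \<ge> ereal (ln M / real k)"
    by (rule limsup_lower[OF vt k1 dd d1 rR]) (simp add: M_def cr_def)
  ultimately have "ereal (c * real d / 4) \<le> limsup (\<lambda>n. growth_term E n R \<delta> x)"
    using order_trans[of "ereal (c * real d / 4)" "ereal (ln M / real k)"] by simp
  then show ?thesis unfolding d_def .
qed

lemma g_anti:
  assumes d: "\<delta> \<ge> 0" and RR: "R \<le> R'"
  shows "limsup (\<lambda>n. growth_term E n R' \<delta> x) \<le> limsup (\<lambda>n. growth_term E n R \<delta> x)"
proof (rule Limsup_mono, rule always_eventually, rule allI)
  fix n
  let ?s = "sep_count E n R \<delta> x" and ?s' = "sep_count E n R' \<delta> x"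
  have "?s' \<le> ?s" unfolding sep_count_def
  proof (rule Sup_subset_mono, rule subsetI)
    fix y assume "y \<in> {ereal (real (card S)) | S. finite S \<and> S \<subseteq> delta_paths E n \<delta> x \<and> separated E R' S}"
    then obtain S where S: "y = ereal (real (card S))" "finite S" "S \<subseteq> delta_paths E n \<delta> x" "separated E R' S"
      by auto
    have "separated E R S" using S(4) RR unfolding separated_def by fastforce
    then show "y \<in> {ereal (real (card S)) | S. finite S \<and> S \<subseteq> delta_paths E n \<delta> x \<and> separated E R S}"
      using S by blast
  qed
  have s1: "?s' \<ge> 1" by (rule sep_ge1[OF d])
  show "growth_term E n R' \<delta> x \<le> growth_term E n R \<delta> x"
  proof (cases "?s = \<infinity>")
    case True then show ?thesis unfolding growth_term_def Let_def by simp
  next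
    case False
    then have F': "?s' \<noteq> \<infinity>" using \<open>?s' \<le> ?s\<close> by auto
    obtain a where a: "?s = ereal a" using False sep_ge1[OF d, of n R x] by (cases ?s) auto
    obtain b where b: "?s' = ereal b" using F' s1 by (cases ?s') auto
    have "b \<le> a" "b \<ge> 1" using a b \<open>?s' \<le> ?s\<close> s1 by auto
    then have "ln b / real n \<le> ln a / real n" by (simp add: divide_right_mono)
    then show ?thesis using False F' a b unfolding growth_term_def Let_def by simp
  qed
qed

lemma anti_tendsto:
  fixes g :: "real \<Rightarrow> ereal"
  assumes "\<And>R R'. R \<le> R' \<Longrightarrow> g R' \<le> g R"
  shows "(g \<longlongrightarrow> (INF R. g R)) at_top"
proof (rule order_tendstoI)
  fix a assume "a < (INF R. g R)"
  then show "\<forall>\<^sub>F R in at_top. a < g R"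
    by (intro always_eventually allI) (meson INF_lower UNIV_I less_le_trans)
next
  fix a assume "(INF R. g R) < a"
  then obtain R0 where R0: "g R0 < a" by (auto simp: INF_less_iff)
  have "g R < a" if "R \<ge> R0" for R using assms[OF that] R0 by (rule le_less_trans)
  then show "\<forall>\<^sub>F R in at_top. g R < a" unfolding eventually_at_top_linorder by blast
qed

end



theorem mainTheorem17:
  fixes E :: "'a \<Rightarrow> 'a \<Rightarrow> bool" and x :: 'a
  assumes sym: "\<And>a b. E a b \<longleftrightarrow> E b a"
    and conn: "graph_connected E"
    and vt: "vertex_transitive E"
    and lf: "locally_finite E"
  shows "((\<lambda>l::nat. ln (real (card (gball E x l))) / real l) \<longlonglongrightarrow> 0
            \<longrightarrow> coarse_entropy E x = 0)
       \<and> (limsup (\<lambda>l::nat. ereal (ln (real (card (gball E x l))) / real l)) > 0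
            \<longrightarrow> coarse_entropy E x = \<infinity>)"
proof -
  interpret grph E using sym conn lf by unfold_locales
  define G where "G \<delta> = Lim at_top (\<lambda>R::real. limsup (\<lambda>n. growth_term E n R \<delta> x))" for \<delta> :: real
  have ce: "coarse_entropy E x = Lim at_top G" unfolding coarse_entropy_def G_def ..
  have P1: "coarse_entropy E x = 0"
    if h: "(\<lambda>l::nat. ln (real (card (gball E x l))) / real l) \<longlonglongrightarrow> 0"
  proof -
    have "G \<delta> = 0" if d: "\<delta> \<ge> 1" for \<delta>
      unfolding G_def by (rule tendsto_Lim[OF trivial_limit_at_top_linorder part_i_inner[OF vt h d]])
    then have "eventually (\<lambda>\<delta>. G \<delta> = 0) at_top" unfolding eventually_at_top_linorder by blast
    then have "(G \<longlongrightarrow> 0) at_top" by (rule tendsto_eventually)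
    then show ?thesis unfolding ce by (rule tendsto_Lim[OF trivial_limit_at_top_linorder])
  qed
  have P2: "coarse_entropy E x = \<infinity>"
    if h: "limsup (\<lambda>l::nat. ereal (ln (real (card (gball E x l))) / real l)) > 0"
  proof -
    obtain c where c: "0 < ereal c" "ereal c < limsup (\<lambda>l::nat. ereal (ln (real (card (gball E x l))) / real l))"
      using ereal_dense2[OF h] by blast
    have c0: "c > 0" using c(1) by simp
    have freq: "\<forall>N. \<exists>l\<ge>N. ln (real (card (gball E x l))) / real l > c"
    proof (rule ccontr)
      assume "\<not> ?thesis"
      then obtain N where N: "\<And>l. l \<ge> N \<Longrightarrow> ln (real (card (gball E x l))) / real l \<le> c"
        by (meson not_le)
      have "eventually (\<lambda>l. ereal (ln (real (card (gball E x l))) / real l) \<le> ereal c) sequentially"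
        unfolding eventually_sequentially using N by auto
      then have "limsup (\<lambda>l::nat. ereal (ln (real (card (gball E x l))) / real l)) \<le> ereal c"
        by (rule Limsup_bounded)
      with c(2) show False by simp
    qed
    have Gb: "G \<delta> \<ge> ereal (c * real (nat \<lfloor>\<delta>\<rfloor>) / 4)" if d: "\<delta> \<ge> 1" for \<delta>
    proof -
      let ?g = "\<lambda>R::real. limsup (\<lambda>n. growth_term E n R \<delta> x)"
      have "(?g \<longlongrightarrow> (INF R. ?g R)) at_top"
        by (rule anti_tendsto) (rule g_anti, use d in simp_all)
      then have "G \<delta> = (INF R. ?g R)" unfolding G_def
        by (rule tendsto_Lim[OF trivial_limit_at_top_linorder])
      moreover have "ereal (c * real (nat \<lfloor>\<delta>\<rfloor>) / 4) \<le> (INF R. ?g R)"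
        by (rule INF_greatest) (rule part_ii_R[OF vt c0 freq d])
      ultimately show ?thesis by simp
    qed
    have "(G \<longlongrightarrow> \<infinity>) at_top" unfolding tendsto_PInfty
    proof
      fix r :: real
      have "eventually (\<lambda>\<delta>. \<delta> \<ge> max 1 (4 * \<bar>r\<bar> / c + 2)) at_top" by (rule eventually_ge_at_top)
      then show "eventually (\<lambda>\<delta>. ereal r < G \<delta>) at_top"
      proof (rule eventually_mono)
        fix \<delta> assume d: "max 1 (4 * \<bar>r\<bar> / c + 2) \<le> \<delta>"
        have "real (nat \<lfloor>\<delta>\<rfloor>) \<ge> \<delta> - 1" using d by linarith
        then have "real (nat \<lfloor>\<delta>\<rfloor>) > 4 * \<bar>r\<bar> / c" using d by linarith
        then have "c * real (nat \<lfloor>\<delta>\<rfloor>) > 4 * \<bar>r\<bar>" using c0 by (simp add: field_simps)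
        then have "r < c * real (nat \<lfloor>\<delta>\<rfloor>) / 4" by linarith
        then have "ereal r < ereal (c * real (nat \<lfloor>\<delta>\<rfloor>) / 4)" by simp
        also have "\<dots> \<le> G \<delta>" using Gb d by simp
        finally show "ereal r < G \<delta>" .
      qed
    qed
    then show ?thesis unfolding ce by (rule tendsto_Lim[OF trivial_limit_at_top_linorder])
  qed
  show ?thesis using P1 P2 by blast
qed

end
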